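(* Let $\rho>0$, $n\in\mathbb{Z}_+$, $t\ge 0$ and $p\in[0,1]$. For the ancestral chain started at $(a(0),b(0),c(0))=(n,0,1)$ with $s(0)=0$, $\mathbb{E}_{n,0,1,0}[p^{a(t)}\mid s(t)=0]=\tilde\nu_{n,0,1}(t)$, where $\tilde\nu_{n,0,1}(t)$ is $\nu_{n,0,1}(t)$ with $q=g=1$ and $\rho=0$ substituted.
   Context: The ancestral chain $(a(t),b(t),c(t))$ with parameter $\rho$ is the continuous-time Markov chain on $\mathbb{Z}_+^3\setminus\{\mathbf 0\}$ which from $(a,b,c)$ jumps to $(a+1,b+1,c-1)$ at rate $c\rho/2$ (a recombination event), to $(a-1,b-1,c+1)$ at rate $ab$, to $(a-1,b,c)$ at rate $ac+a(a-1)/2$, to $(a,b-1,c)$ at rate $bc+b(b-1)/2$, and to $(a,b,c-1)$ at rate $c(c-1)/2$; $s(t)$ counts recombination jumps in $(0,t)$. $\nu_{l,m,n}(t)=\mathbb{E}_{l,m,n}[p^{a(t)}q^{b(t)}g^{c(t)}]$ (equivalently, by moment duality, $\mathbb{E}_{p,q,g}[x(t)^ly(t)^mx_1(t)^n]$ for the two-locus two-allele Wright–Fisher diffusion with recombination parameter $\rho$ and initial allele frequencies $p,q$ and initial $A_1B_1$ gamete frequency $g$); it is a polynomial in $(p,q,g)$ whose coefficients depend on $\rho$ and $t$, and $\tilde\nu_{n,0,1}(t)$ is this polynomial evaluated at $q=g=1$, $\rho=0$. *)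

theory Defs
  imports Complex_Main
begin

text \<open>States of the augmented ancestral chain: (a, b, c, f) where f = min(s, 1)
  records whether at least one recombination event has occurred. The pair
  (ancestral chain, f) is itself a continuous-time Markov chain (a function of
  the Markov chain (a,b,c,s) that is again Markov), and {s(t)=0} = {f(t)=0}.\<close>

type_synonym state = "nat \<times> nat \<times> nat \<times> nat"

definition jumps :: "real \<Rightarrow> state \<Rightarrow> (state \<times> real) list" where
  "jumps rho x = (case x of (a, b, c, f) \<Rightarrow>
     [((a + 1, b + 1, c - 1, 1), real c * rho / 2),
      ((a - 1, b - 1, c + 1, f), real a * real b),
      ((a - 1, b, c, f), real a * real c + real a * (real a - 1) / 2),
      ((a, b - 1, c, f), real b * real c + real b * (real b - 1) / 2),
      ((a, b, c - 1, f), real c * (real c - 1) / 2)])"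

definition gen :: "real \<Rightarrow> state \<Rightarrow> state \<Rightarrow> real" where
  "gen rho x y = sum_list [r. (z, r) \<leftarrow> jumps rho x, z = y]
      - (if x = y then sum_list (map snd (jumps rho x)) else 0)"

text \<open>Finite state space reachable from states with a + b + 2c \<le> N
  (a + b + 2c never increases along the chain).\<close>
definition states :: "nat \<Rightarrow> state set" where
  "states N = {(a, b, c, f). a \<le> N \<and> b \<le> N \<and> c \<le> N \<and> f \<le> 1 \<and> a + b + 2 * c \<le> N}"

fun genpow :: "real \<Rightarrow> nat \<Rightarrow> nat \<Rightarrow> state \<Rightarrow> state \<Rightarrow> real" where
  "genpow rho N 0 x y = (if x = y then 1 else 0)"
| "genpow rho N (Suc k) x y = (\<Sum>z\<in>states N. gen rho x z * genpow rho N k z y)"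

definition trans :: "real \<Rightarrow> nat \<Rightarrow> real \<Rightarrow> state \<Rightarrow> state \<Rightarrow> real" where
  "trans rho N t x y = (\<Sum>k. t ^ k / fact k * genpow rho N k x y)"

definition nu :: "real \<Rightarrow> nat \<Rightarrow> nat \<Rightarrow> nat \<Rightarrow> real \<Rightarrow> real \<Rightarrow> real \<Rightarrow> real \<Rightarrow> real" where
  "nu rho l m n t p q g =
     (\<Sum>y\<in>states (l + m + 2 * n).
        trans rho (l + m + 2 * n) t (l, m, n, 0) y *
        (case y of (a, b, c, f) \<Rightarrow> p ^ a * q ^ b * g ^ c))"

definition cond_exp_norec :: "real \<Rightarrow> nat \<Rightarrow> real \<Rightarrow> real \<Rightarrow> real" where
  "cond_exp_norec rho n t p =
     (\<Sum>y\<in>{y \<in> states (n + 2). snd (snd (snd y)) = 0}.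
        trans rho (n + 2) t (n, 0, 1, 0) y * p ^ fst y)
     / (\<Sum>y\<in>{y \<in> states (n + 2). snd (snd (snd y)) = 0}.
        trans rho (n + 2) t (n, 0, 1, 0) y)"

end

theory Submission
  imports Defs
begin

definition lam :: "nat \<Rightarrow> real" where "lam a = real a + real a * (real a - 1) / 2"

lemma gen_S: "gen rho (a,0,1,0) z = (if z=(a-1,0,1,0) then lam a else 0)
   - (if z=(a,0,1,0) then lam a + rho/2 else 0) + (if z=(a+1,1,0,1) then rho/2 else 0)"
  by (cases a) (auto simp: gen_def jumps_def lam_def algebra_simps)

lemma gen_f1: "snd(snd(snd z)) = 1 \<Longrightarrow> snd(snd(snd w)) \<noteq> 1 \<Longrightarrow> gen rho z w = 0"
  by (cases z; cases w) (auto simp: gen_def jumps_def)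

lemma finite_states: "finite (states N)"
proof -
  have "states N \<subseteq> {..N} \<times> {..N} \<times> {..N} \<times> {..1}" by (auto simp: states_def)
  thus ?thesis by (rule finite_subset) auto
qed

lemma genpow_f1: "snd(snd(snd z)) = 1 \<Longrightarrow> snd(snd(snd y)) = 0 \<Longrightarrow> genpow rho N k z y = 0"
proof (induction k arbitrary: z)
  case 0 then show ?case by auto
next
  case (Suc k)
  have "gen rho z w * genpow rho N k w y = 0" for w
    using Suc gen_f1[of z w rho] by (cases "snd(snd(snd w)) = 1") auto
  then show ?case by (simp only: genpow.simps) (rule sum.neutral, auto)
qed

lemma genpow_step:
  assumes "a \<le> n" "rho = 0 \<or> snd(snd(snd y)) = 0"
  shows "genpow rho (n+2) (Suc k) (a,0,1,0) y = lam a * genpow rho (n+2) k (a-1,0,1,0) y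
      - (lam a + rho/2) * genpow rho (n+2) k (a,0,1,0) y"
proof -
  have r: "rho/2 * genpow rho (n+2) k (a+1,1,0,1) y = 0"
    using assms(2) genpow_f1[of "(a+1,1,0,1)" y rho "n+2" k] by auto
  have "genpow rho (n+2) (Suc k) (a,0,1,0) y =
     (\<Sum>z\<in>states (n+2). (if z=(a-1,0,1,0) then lam a * genpow rho (n+2) k z y else 0)
     - (if z=(a,0,1,0) then (lam a + rho/2) * genpow rho (n+2) k z y else 0)
     + (if z=(a+1,1,0,1) then rho/2 * genpow rho (n+2) k z y else 0))"
    by (simp only: genpow.simps, rule sum.cong, simp, simp only: gen_S) (simp add: algebra_simps)
  also have "\<dots> = lam a * genpow rho (n+2) k (a-1,0,1,0) y
      - (lam a + rho/2) * genpow rho (n+2) k (a,0,1,0) y"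
    using assms(1) r by (simp only: sum.distrib sum_subtractf finite_states sum.delta) (auto simp: states_def)
  finally show ?thesis .
qed

lemma binom_step:
  fixes u :: real
  shows "(\<Sum>i\<le>Suc k. of_nat (Suc k choose i) * u^i * G (Suc k - i)) =
     (\<Sum>i\<le>k. of_nat (k choose i) * u^i * G (Suc k - i)) + u * (\<Sum>i\<le>k. of_nat (k choose i) * u^i * G (k - i))"
proof -
  have A: "(\<Sum>i\<le>k. of_nat (k choose i) * u^i * G (Suc k - i)) =
      (\<Sum>i\<le>Suc k. of_nat (k choose i) * u^i * G (Suc k - i))" by simp
  also have "\<dots> = G (Suc k) + (\<Sum>i\<le>k. of_nat (k choose Suc i) * u^Suc i * G (k - i))"
    by (subst sum.atMost_Suc_shift) simp
  finally have A': "(\<Sum>i\<le>k. of_nat (k choose i) * u^i * G (Suc k - i)) = G (Suc k) + (\<Sum>i\<le>k. of_nat (k choose Suc i) * u^Suc i * G (k - i))" .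
  have "(\<Sum>i\<le>Suc k. of_nat (Suc k choose i) * u^i * G (Suc k - i)) =
      G (Suc k) + (\<Sum>i\<le>k. of_nat (Suc k choose Suc i) * u^Suc i * G (k - i))"
    by (subst sum.atMost_Suc_shift) simp
  also have "\<dots> = G (Suc k) + (\<Sum>i\<le>k. of_nat (k choose Suc i) * u^Suc i * G (k - i))
      + (\<Sum>i\<le>k. of_nat (k choose i) * u^Suc i * G (k - i))"
    by (simp add: sum.distrib algebra_simps)
  also have "(\<Sum>i\<le>k. of_nat (k choose i) * u^Suc i * G (k - i)) = u * (\<Sum>i\<le>k. of_nat (k choose i) * u^i * G (k - i))"
    by (simp add: sum_distrib_left algebra_simps)
  finally show ?thesis using A' by simp
qed

lemma hg:
  assumes "snd(snd(snd y)) = 0" "a \<le> n"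
  shows "genpow rho (n+2) k (a,0,1,0) y =
    (\<Sum>i\<le>k. of_nat (k choose i) * (-rho/2)^i * genpow 0 (n+2) (k - i) (a,0,1,0) y)"
  using assms(2)
proof (induction k arbitrary: a)
  case 0 then show ?case by simp
next
  case (Suc k)
  define g where "g j b = genpow 0 (n+2) j (b,0,1,0) y" for j b
  have gs: "g (Suc j) b = lam b * (g j (b-1) - g j b)" if "b \<le> n" for j b
    using genpow_step[of b n 0 y j] that unfolding g_def by (simp add: algebra_simps)
  have "genpow rho (n+2) (Suc k) (a,0,1,0) y = lam a * (genpow rho (n+2) k (a-1,0,1,0) y
      - genpow rho (n+2) k (a,0,1,0) y) + (-rho/2) * genpow rho (n+2) k (a,0,1,0) y"
    using genpow_step[of a n rho y k] Suc.prems assms(1) by (simp add: algebra_simps)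
  also have "\<dots> = lam a * ((\<Sum>i\<le>k. of_nat (k choose i) * (-rho/2)^i * g (k - i) (a-1))
      - (\<Sum>i\<le>k. of_nat (k choose i) * (-rho/2)^i * g (k - i) a))
      + (-rho/2) * (\<Sum>i\<le>k. of_nat (k choose i) * (-rho/2)^i * g (k - i) a)"
    using Suc.IH[of "a-1"] Suc.IH[of a] Suc.prems unfolding g_def by simp
  also have "lam a * ((\<Sum>i\<le>k. of_nat (k choose i) * (-rho/2)^i * g (k - i) (a-1))
      - (\<Sum>i\<le>k. of_nat (k choose i) * (-rho/2)^i * g (k - i) a))
      = (\<Sum>i\<le>k. of_nat (k choose i) * (-rho/2)^i * g (Suc k - i) a)"
  proof -
    have "lam a * ((\<Sum>i\<le>k. of_nat (k choose i) * (-rho/2)^i * g (k - i) (a-1))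
      - (\<Sum>i\<le>k. of_nat (k choose i) * (-rho/2)^i * g (k - i) a))
      = (\<Sum>i\<le>k. of_nat (k choose i) * (-rho/2)^i * (lam a * (g (k - i) (a-1) - g (k - i) a)))"
      by (simp add: sum_distrib_left sum_subtractf[symmetric] algebra_simps)
    also have "\<dots> = (\<Sum>i\<le>k. of_nat (k choose i) * (-rho/2)^i * g (Suc k - i) a)"
      by (rule sum.cong) (use gs[of a] Suc.prems Suc_diff_le in auto)
    finally show ?thesis .
  qed
  also have "\<dots> + (-rho/2) * (\<Sum>i\<le>k. of_nat (k choose i) * (-rho/2)^i * g (k - i) a)
     = (\<Sum>i\<le>Suc k. of_nat (Suc k choose i) * (-rho/2)^i * g (Suc k - i) a)"
    by (rule binom_step[symmetric])
  finally show ?case unfolding g_def .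
qed


lemma lam_nonneg: "lam a \<ge> 0"
proof -
  have "lam a = real a * (real a + 1) / 2" by (simp add: lam_def field_simps)
  moreover have "0 \<le> real a * (real a + 1) / 2" by simp
  ultimately show ?thesis by linarith
qed

lemma lam_mono: "a \<le> n \<Longrightarrow> lam a \<le> lam n"
proof -
  assume h: "a \<le> n"
  have e: "lam m = real m * (real m + 1) / 2" for m by (simp add: lam_def field_simps)
  have "real a * (real a + 1) \<le> real n * (real n + 1)"
    using h by (intro mult_mono) auto
  thus ?thesis unfolding e by simp
qed

lemma g_bound:
  assumes "a \<le> n"
  shows "\<bar>genpow 0 (n+2) k (a,0,1,0) y\<bar> \<le> (2 * lam n + 1) ^ k"
  using assms
proof (induction k arbitrary: a)
  case 0 then show ?case by simp
next
  case (Suc k)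
  let ?L = "2 * lam n + 1"
  have e: "genpow 0 (n+2) (Suc k) (a,0,1,0) y = lam a * (genpow 0 (n+2) k (a-1,0,1,0) y - genpow 0 (n+2) k (a,0,1,0) y)"
    using genpow_step[of a n 0 y k] Suc.prems by (simp add: algebra_simps)
  have b1: "\<bar>genpow 0 (n+2) k (a-1,0,1,0) y - genpow 0 (n+2) k (a,0,1,0) y\<bar> \<le> 2 * ?L ^ k"
    using Suc.IH[of "a-1"] Suc.IH[of a] Suc.prems by (simp add: abs_diff_le_iff) linarith
  have "\<bar>genpow 0 (n+2) (Suc k) (a,0,1,0) y\<bar> \<le> lam n * (2 * ?L ^ k)"
    unfolding e abs_mult using lam_nonneg[of a] lam_mono[OF Suc.prems] b1
    by (intro mult_mono) auto
  also have "\<dots> \<le> ?L ^ Suc k"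
    using lam_nonneg[of n] by (simp add: algebra_simps)
  finally show ?case .
qed

lemma summable_B:
  assumes "a \<le> n"
  shows "summable (\<lambda>k. norm (t^k / fact k * genpow 0 (n+2) k (a,0,1,0) y))"
proof (rule summable_comparison_test')
  show "summable (\<lambda>k. inverse (fact k) * (\<bar>t\<bar> * (2 * lam n + 1)) ^ k)" by (rule summable_exp)
  fix k
  have "\<bar>t^k\<bar> * \<bar>genpow 0 (n+2) k (a,0,1,0) y\<bar> \<le> \<bar>t\<bar>^k * (2 * lam n + 1) ^ k"
    using g_bound[OF assms] by (simp add: power_abs mult_left_mono)
  then show "norm (norm (t^k / fact k * genpow 0 (n+2) k (a,0,1,0) y)) \<le> inverse (fact k) * (\<bar>t\<bar> * (2 * lam n + 1)) ^ k"
    by (simp add: abs_mult power_mult_distrib divide_simps)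
qed

lemma g_zero:
  assumes "a \<le> n" "snd(snd(snd y)) \<noteq> 0"
  shows "genpow 0 (n+2) k (a,0,1,0) y = 0"
  using assms(1)
proof (induction k arbitrary: a)
  case 0 then show ?case using assms(2) by auto
next
  case (Suc k)
  then show ?case using genpow_step[of a n 0 y k] by simp
qed

lemma row_sum:
  assumes "a \<le> n"
  shows "(\<Sum>y\<in>states (n+2). genpow 0 (n+2) k (a,0,1,0) y) = (if k = 0 then 1 else 0)"
  using assms
proof (induction k arbitrary: a)
  case 0
  have "(a,0,1,0) \<in> states (n+2)" using 0 by (simp add: states_def)
  then show ?case by (simp add: finite_states)
next
  case (Suc k)
  have "(\<Sum>y\<in>states (n+2). genpow 0 (n+2) (Suc k) (a,0,1,0) y) =
     (\<Sum>y\<in>states (n+2). lam a * genpow 0 (n+2) k (a-1,0,1,0) y - lam a * genpow 0 (n+2) k (a,0,1,0) y)"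
    by (rule sum.cong) (use genpow_step[of a n 0 _ k] Suc.prems in auto)
  also have "\<dots> = 0"
    using Suc.IH[of "a-1"] Suc.IH[of a] Suc.prems
    by (simp add: sum_subtractf sum_distrib_left[symmetric])
  finally show ?case by simp
qed

lemma q1: "inverse (fact k) * (y::real)^k = y^k / fact k" by (simp add: field_simps)
lemma q2: "norm ((x::real)^k / fact k) = \<bar>x\<bar>^k / fact k" by (simp add: power_abs abs_divide)
lemma q3: "(x::real)^n /\<^sub>R fact n = x^n / fact n" by (simp add: field_simps)

lemma trans_factor:
  assumes "snd(snd(snd y)) = 0"
  shows "trans rho (n+2) t (n,0,1,0) y = exp (-rho*t/2) * trans 0 (n+2) t (n,0,1,0) y"
proof -
  define A where "A i = (-rho*t/2)^i / fact i" for i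
  define B where "B j = t^j / fact j * genpow 0 (n+2) j (n,0,1,0) y" for j
  have sA: "summable (\<lambda>k. norm (A k))"
  proof -
    have "summable (\<lambda>k. inverse (fact k) * \<bar>-rho*t/2\<bar> ^ k)" by (rule summable_exp)
    moreover have "norm (A k) = inverse (fact k) * \<bar>-rho*t/2\<bar> ^ k" for k
      unfolding A_def q1 by (rule q2)
    ultimately show ?thesis by simp
  qed
  have sB: "summable (\<lambda>k. norm (B k))" unfolding B_def by (rule summable_B) simp
  have eA: "(\<Sum>k. A k) = exp (-rho*t/2)"
  proof -
    have "(\<lambda>n. (-rho*t/2)^n /\<^sub>R fact n) = A"
      by (rule ext) (simp only: A_def q3)
    thus ?thesis using exp_converges[of "-rho*t/2"] by (simp add: sums_iff)
  qed
  have "trans rho (n+2) t (n,0,1,0) y = (\<Sum>k. \<Sum>i\<le>k. A i * B (k - i))"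
    unfolding trans_def
  proof (rule suminf_cong)
    fix k
    have "t ^ k / fact k * genpow rho (n + 2) k (n, 0, 1, 0) y =
      (\<Sum>i\<le>k. t ^ k / fact k * (of_nat (k choose i) * (-rho/2)^i * genpow 0 (n+2) (k - i) (n,0,1,0) y))"
      by (subst hg[OF assms, where a=n and rho=rho and k=k], simp, simp add: sum_distrib_left)
    also have "\<dots> = (\<Sum>i\<le>k. A i * B (k - i))"
    proof (rule sum.cong)
      fix i assume "i \<in> {..k}"
      then have ik: "i \<le> k" by simp
      have tk: "t ^ k = t ^ i * t ^ (k - i)" using ik by (simp add: power_add[symmetric])
      have ru: "(-rho*t/2)^i = t^i * (-rho/2)^i"
      proof -
        have "-rho*t/2 = t * (-rho/2)" by simp
        thus ?thesis by (simp only: power_mult_distrib)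
      qed
      show "t ^ k / fact k * (of_nat (k choose i) * (-rho/2)^i * genpow 0 (n+2) (k - i) (n,0,1,0) y) = A i * B (k - i)"
        unfolding A_def B_def binomial_fact[OF ik] tk ru
        by (simp add: power_mult_distrib field_simps)
    qed simp
    finally show "t ^ k / fact k * genpow rho (n + 2) k (n, 0, 1, 0) y = (\<Sum>i\<le>k. A i * B (k - i))" .
  qed
  also have "\<dots> = (\<Sum>k. A k) * (\<Sum>k. B k)"
    by (rule Cauchy_product[OF sA sB, symmetric])
  also have "(\<Sum>k. B k) = trans 0 (n+2) t (n,0,1,0) y" unfolding B_def trans_def ..
  finally show ?thesis using eA by simp
qed

theorem mainTheorem5:
  fixes rho t p :: real and n :: nat
  assumes "rho > 0" and "t \<ge> 0" and "0 \<le> p" and "p \<le> 1"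
  shows "cond_exp_norec rho n t p = nu 0 n 0 1 t p 1 1"
proof -
  define T0 where "T0 y = trans 0 (n+2) t (n,0,1,0) y" for y
  define F0 where "F0 = {y \<in> states (n + 2). snd (snd (snd y)) = 0}"
  define E where "E = exp (-rho*t/2)"
  have E0: "E \<noteq> 0" unfolding E_def by simp
  have fin: "finite F0" unfolding F0_def using finite_states by simp
  have sub: "F0 \<subseteq> states (n+2)" unfolding F0_def by auto
  have Tz: "T0 y = 0" if "snd (snd (snd y)) \<noteq> 0" for y
    unfolding T0_def trans_def using g_zero[of n n y] that by simp
  have off: "T0 y = 0" if "y \<in> states (n+2) - F0" for y
    using that Tz unfolding F0_def by auto
  have num: "(\<Sum>y\<in>F0. trans rho (n + 2) t (n, 0, 1, 0) y * p ^ fst y) = E * (\<Sum>y\<in>states (n+2). T0 y * p ^ fst y)"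
  proof -
    have "(\<Sum>y\<in>F0. trans rho (n + 2) t (n, 0, 1, 0) y * p ^ fst y) = (\<Sum>y\<in>F0. E * (T0 y * p ^ fst y))"
    proof (rule sum.cong)
      fix y assume "y \<in> F0"
      then have "snd (snd (snd y)) = 0" unfolding F0_def by simp
      from trans_factor[OF this, of rho n t]
      show "trans rho (n + 2) t (n, 0, 1, 0) y * p ^ fst y = E * (T0 y * p ^ fst y)"
        unfolding T0_def E_def by simp
    qed simp
    also have "\<dots> = E * (\<Sum>y\<in>F0. T0 y * p ^ fst y)" by (simp add: sum_distrib_left)
    also have "(\<Sum>y\<in>F0. T0 y * p ^ fst y) = (\<Sum>y\<in>states (n+2). T0 y * p ^ fst y)"
      by (rule sum.mono_neutral_left[OF finite_states sub]) (simp add: off)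
    finally show ?thesis .
  qed
  have den: "(\<Sum>y\<in>F0. trans rho (n + 2) t (n, 0, 1, 0) y) = E * (\<Sum>y\<in>states (n+2). T0 y)"
  proof -
    have "(\<Sum>y\<in>F0. trans rho (n + 2) t (n, 0, 1, 0) y) = (\<Sum>y\<in>F0. E * T0 y)"
    proof (rule sum.cong)
      fix y assume "y \<in> F0"
      then have "snd (snd (snd y)) = 0" unfolding F0_def by simp
      from trans_factor[OF this, of rho n t]
      show "trans rho (n + 2) t (n, 0, 1, 0) y = E * T0 y"
        unfolding T0_def E_def by simp
    qed simp
    also have "\<dots> = E * (\<Sum>y\<in>F0. T0 y)" by (simp add: sum_distrib_left)
    also have "(\<Sum>y\<in>F0. T0 y) = (\<Sum>y\<in>states (n+2). T0 y)"
      by (rule sum.mono_neutral_left[OF finite_states sub]) (simp add: off)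
    finally show ?thesis .
  qed
  have one: "(\<Sum>y\<in>states (n+2). T0 y) = 1"
  proof -
    have "(\<Sum>y\<in>states (n+2). T0 y) = (\<Sum>k. \<Sum>y\<in>states (n+2). t^k / fact k * genpow 0 (n+2) k (n,0,1,0) y)"
      unfolding T0_def trans_def
      by (rule suminf_sum[symmetric]) (rule summable_norm_cancel, rule summable_B, simp)
    also have "\<dots> = (\<Sum>k. if k = 0 then 1 else 0)"
    proof (rule suminf_cong)
      fix k
      have "(\<Sum>y\<in>states (n+2). t^k / fact k * genpow 0 (n+2) k (n,0,1,0) y)
          = t^k / fact k * (\<Sum>y\<in>states (n+2). genpow 0 (n+2) k (n,0,1,0) y)"
        by (simp only: sum_distrib_left)
      also have "\<dots> = (if k = 0 then 1 else 0)" by (simp only: row_sum[of n n k] order_refl) simp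
      finally show "(\<Sum>y\<in>states (n+2). t^k / fact k * genpow 0 (n+2) k (n,0,1,0) y) = (if k = 0 then 1 else 0)" .
    qed
    also have "\<dots> = 1" using sums_single[of 0 "\<lambda>_. 1::real"] by (simp add: sums_iff)
    finally show ?thesis .
  qed
  have nu_eq: "nu 0 n 0 1 t p 1 1 = (\<Sum>y\<in>states (n+2). T0 y * p ^ fst y)"
    unfolding nu_def T0_def by (rule sum.cong) (auto split: prod.splits)
  show ?thesis
    unfolding cond_exp_norec_def F0_def[symmetric] num den one nu_eq using E0 by simp
qed

end
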